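(* The Recursive Measure satisfies the added-NO-blocker postulate. For every SVG $\mathcal{G}=(N,\mathcal{W})$ and all $i,j\in N$ with $j$ not a dummy in $\mathcal{G}$: $$\frac{RM'^-_i(\mathcal{G})}{RM'^-_j(\mathcal{G})}=\frac{RM'^-_i(\mathcal{G}^N)}{RM'^-_j(\mathcal{G}^N)}.$$
   Context: A simple voting game (SVG) is a pair $\mathcal{G}=(N,\mathcal{W})$ with $N$ a nonempty finite set of players and $\mathcal{W}\subseteq 2^N$ monotone, $\emptyset\notin\mathcal{W}$, $N\in\mathcal{W}$. Divisions are identified with their YES-sets. Decisiveness and success: - Player $k$ is YES-decisive in $S$ if $k\in S\in\mathcal{W}$ and $S\setminus\{k\}\notin\mathcal{W}$. - Player $k$ is NO-decisive in $S$ if $k\notin S\notin\mathcal{W}$ and $S\cup\{k\}\in\mathcal{W}$. - A dummy is never decisive. - Player $k$ is successful in $S$ if ($k\in S\in\mathcal{W}$) or ($k\notin S\notin\mathcal{W}$). Loyal children: if $S\in\mathcal{W}$, they are the sets $S\setminus\{m\}\in\mathcal{W}$ with $m\in S$. If $S\notin\mathcal{W}$, they are the sets $S\cup\{m\}\notin\mathcal{W}$ with $m\notin S$. Recursive efficacy score $\alpha_k(S)$: - $\alpha_k(S)=1$ if $k$ is decisive; - $\alpha_k(S)=0$ if $k$ is not successful; - otherwise, the average of $\alpha_k$ over the loyal children. For a game with $m$ players, the a priori RM NO-power is $RM'^-_k=2^{-m}\sum_{S\not\ni k}\alpha_k(S)$. For a new player $0\notin N$, the added-NO-blocker game is $\mathcal{G}^N=(N\cup\{0\},\{S\cup\{0\}:S\subseteq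 N\}\cup\mathcal{W})$. *)

theory Defs
  imports Complex_Main
begin

definition svg :: "'a set \<Rightarrow> 'a set set \<Rightarrow> bool" where
  "svg N W \<longleftrightarrow> finite N \<and> N \<noteq> {} \<and> W \<subseteq> Pow N \<and> {} \<notin> W \<and> N \<in> W \<and>
     (\<forall>S T. S \<in> W \<and> S \<subseteq> T \<and> T \<subseteq> N \<longrightarrow> T \<in> W)"

definition yes_decisive :: "'a set set \<Rightarrow> 'a \<Rightarrow> 'a set \<Rightarrow> bool" where
  "yes_decisive W k S \<longleftrightarrow> k \<in> S \<and> S \<in> W \<and> S - {k} \<notin> W"

definition no_decisive :: "'a set set \<Rightarrow> 'a \<Rightarrow> 'a set \<Rightarrow> bool" where
  "no_decisive W k S \<longleftrightarrow> k \<notin> S \<and> S \<notin> W \<and> insert k S \<in> W"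

definition decisive :: "'a set set \<Rightarrow> 'a \<Rightarrow> 'a set \<Rightarrow> bool" where
  "decisive W k S \<longleftrightarrow> yes_decisive W k S \<or> no_decisive W k S"

definition successful :: "'a set set \<Rightarrow> 'a \<Rightarrow> 'a set \<Rightarrow> bool" where
  "successful W k S \<longleftrightarrow> (k \<in> S \<and> S \<in> W) \<or> (k \<notin> S \<and> S \<notin> W)"

definition dummy :: "'a set \<Rightarrow> 'a set set \<Rightarrow> 'a \<Rightarrow> bool" where
  "dummy N W k \<longleftrightarrow> (\<forall>S. S \<subseteq> N \<longrightarrow> \<not> decisive W k S)"

text \<open>Loyal children of S are indexed by m: S - {m} (m \<in> S, S - {m} \<in> W) if S \<in> W,
  and insert m S (m \<in> N - S, insert m S \<notin> W) otherwise; distinct m give distinct children,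
  so averaging over the indices equals averaging over the children.\<close>

text \<open>Recursive efficacy score alpha_k(S); average over loyal children.
  (Guard: value 0 outside the finite setting, which never arises for S \<subseteq> N, N finite.)\<close>
function alpha :: "'a set \<Rightarrow> 'a set set \<Rightarrow> 'a \<Rightarrow> 'a set \<Rightarrow> real" where
  "alpha N W k S =
     (if \<not> finite N \<or> \<not> finite S then 0
      else if decisive W k S then 1
      else if \<not> successful W k S then 0
      else if S \<in> W then
        (\<Sum>m\<in>{m \<in> S. S - {m} \<in> W}. alpha N W k (S - {m})) / card {m \<in> S. S - {m} \<in> W}
      else
        (\<Sum>m\<in>{m \<in> N - S. insert m S \<notin> W}. alpha N W k (insert m S))
          / card {m \<in> N - S. insert m S \<notin> W})"
  by pat_completeness auto
termination
  apply (relation "measure (\<lambda>(N, W, k, S). if S \<in> W then card S else card (N - S))")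
    apply simp
   apply (clarsimp, metis card_gt_0_iff diff_Suc_less empty_iff)
  apply clarsimp
  apply (metis Diff_iff card_gt_0_iff diff_Suc_less empty_iff finite_Diff)
  done

declare alpha.simps [simp del]

definition RM_no :: "'a set \<Rightarrow> 'a set set \<Rightarrow> 'a \<Rightarrow> real" where
  "RM_no N W k = (\<Sum>S\<in>{S. S \<subseteq> N \<and> k \<notin> S}. alpha N W k S) / 2 ^ card N"

definition add_no_blocker :: "'a set \<Rightarrow> 'a set set \<Rightarrow> 'a \<Rightarrow> 'a set set" where
  "add_no_blocker N W z = {insert z S | S. S \<subseteq> N} \<union> W"

end

theory Submission
  imports Defs
begin

lemma svg_facts: "svg N W \<Longrightarrow> finite N \<and> W \<subseteq> Pow N"
  by (simp add: svg_def)

lemma alpha_z: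
  assumes "finite N" "W \<subseteq> Pow N" "z \<in> S" "k \<notin> S" "S \<subseteq> insert z N"
  shows "alpha (insert z N) (add_no_blocker N W z) k S = 0"
proof -
  have "S \<in> add_no_blocker N W z"
    unfolding add_no_blocker_def using assms(3,5)
    by (intro UnI1 CollectI exI[of _ "S - {z}"]) auto
  moreover have "finite S" using assms(1,5) finite_subset by blast
  ultimately show ?thesis using assms
    by (subst alpha.simps) (simp add: decisive_def yes_decisive_def no_decisive_def successful_def)
qed

lemma alpha_eq:
  assumes "finite N" "W \<subseteq> Pow N" "z \<notin> N" "k \<in> N"
  shows "S \<subseteq> N \<Longrightarrow> k \<notin> S \<Longrightarrow>
     alpha (insert z N) (add_no_blocker N W z) k S = alpha N W k S"
proof (induction "card (N - S)" arbitrary: S rule: less_induct)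
  case less
  let ?W' = "add_no_blocker N W z"
  have fS: "finite S" using less.prems assms(1) finite_subset by blast
  have zS: "z \<notin> S" using less.prems assms(3) by blast
  have memW': "\<And>T. T \<subseteq> N \<Longrightarrow> T \<in> ?W' \<longleftrightarrow> T \<in> W"
    unfolding add_no_blocker_def using assms(3) by auto
  have SW: "S \<in> ?W' \<longleftrightarrow> S \<in> W" using memW' less.prems by blast
  have kSW: "insert k S \<in> ?W' \<longleftrightarrow> insert k S \<in> W" using memW' less.prems assms(4) by blast
  show ?case
  proof (cases "S \<in> W")
    case True
    then show ?thesis using SW fS assms less.prems
      by (subst (1 2) alpha.simps) (simp add: decisive_def yes_decisive_def no_decisive_def successful_def)
  next
    case False
    have dec: "decisive ?W' k S \<longleftrightarrow> decisive W k S"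
      using SW kSW False less.prems by (simp add: decisive_def yes_decisive_def no_decisive_def)
    have suc: "successful ?W' k S \<longleftrightarrow> successful W k S"
      using SW False less.prems by (simp add: successful_def)
    have ch: "{m \<in> insert z N - S. insert m S \<notin> ?W'} = {m \<in> N - S. insert m S \<notin> W}"
    proof -
      have "insert z S \<in> ?W'" unfolding add_no_blocker_def using less.prems by blast
      moreover have "\<And>m. m \<in> N \<Longrightarrow> insert m S \<in> ?W' \<longleftrightarrow> insert m S \<in> W"
        using memW' less.prems by blast
      ultimately show ?thesis using zS by auto
    qed
    have IH: "\<And>m. m \<in> {m \<in> N - S. insert m S \<notin> W} \<Longrightarrow>
        alpha (insert z N) ?W' k (insert m S) = alpha N W k (insert m S)"
    proof -
      fix m assume m: "m \<in> {m \<in> N - S. insert m S \<notin> W}"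
      show "alpha (insert z N) ?W' k (insert m S) = alpha N W k (insert m S)"
      proof (cases "m = k")
        case True
        have "insert k S \<notin> W" using m True by simp
        have A: "alpha N W k (insert k S) = 0"
          using \<open>insert k S \<notin> W\<close> fS assms(1)
          by (subst alpha.simps) (simp add: decisive_def yes_decisive_def no_decisive_def successful_def)
        have B: "alpha (insert z N) ?W' k (insert k S) = 0"
          using \<open>insert k S \<notin> W\<close> kSW fS assms(1)
          by (subst alpha.simps) (simp add: decisive_def yes_decisive_def no_decisive_def successful_def)
        show ?thesis using A B True by simp
      next
        case False
        have "card (N - insert m S) < card (N - S)"
          using m assms(1) by (intro psubset_card_mono) auto
        then show ?thesis using less.hyps[of "insert m S"] m False less.prems by auto
      qed
    qed
    have sumeq: "(\<Sum>m\<in>{m \<in> N - S. insert m S \<notin> W}. alpha (insert z N) ?W' k (insert m S))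
        = (\<Sum>m\<in>{m \<in> N - S. insert m S \<notin> W}. alpha N W k (insert m S))"
      by (rule sum.cong[OF refl IH])
    show ?thesis
      using False SW dec suc fS assms(1)
      apply (subst (1 2) alpha.simps)
      apply (simp only: ch sumeq)
      by simp
  qed
qed

theorem lemma4:
  fixes N :: "'a set" and W :: "'a set set" and z i j :: 'a
  assumes "svg N W"
    and "z \<notin> N"
    and "i \<in> N" and "j \<in> N"
    and "\<not> dummy N W j"
  shows "RM_no N W i / RM_no N W j
         = RM_no (insert z N) (add_no_blocker N W z) i / RM_no (insert z N) (add_no_blocker N W z) j"
proof -
  have fN: "finite N" and WP: "W \<subseteq> Pow N" using svg_facts[OF assms(1)] by auto
  have half: "RM_no (insert z N) (add_no_blocker N W z) k = RM_no N W k / 2" if k: "k \<in> N" for k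
  proof -
    let ?A = "{S. S \<subseteq> N \<and> k \<notin> S}"
    let ?B = "insert z ` ?A"
    have split: "{S. S \<subseteq> insert z N \<and> k \<notin> S} = ?A \<union> ?B"
    proof (rule set_eqI, rule iffI)
      fix S assume S: "S \<in> {S. S \<subseteq> insert z N \<and> k \<notin> S}"
      show "S \<in> ?A \<union> ?B"
      proof (cases "z \<in> S")
        case True
        then have "S = insert z (S - {z})" by blast
        moreover have "S - {z} \<in> ?A" using S by auto
        ultimately show ?thesis by blast
      qed (use S in auto)
    next
      fix S assume "S \<in> ?A \<union> ?B" then show "S \<in> {S. S \<subseteq> insert z N \<and> k \<notin> S}"
        using k assms(2) by auto
    qed
    have fA: "finite ?A" using fN by simp
    have fB: "finite ?B" using fA by simp
    have disj: "?A \<inter> ?B = {}" using assms(2) by auto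
    have s1: "(\<Sum>S\<in>?A. alpha (insert z N) (add_no_blocker N W z) k S) = (\<Sum>S\<in>?A. alpha N W k S)"
      by (rule sum.cong) (use alpha_eq[OF fN WP assms(2) k] in auto)
    have s2: "(\<Sum>S\<in>?B. alpha (insert z N) (add_no_blocker N W z) k S) = 0"
    proof (rule sum.neutral, rule ballI)
      fix S assume "S \<in> ?B"
      then obtain T where T: "T \<in> ?A" "S = insert z T" by blast
      show "alpha (insert z N) (add_no_blocker N W z) k S = 0"
        using alpha_z[OF fN WP, of z S k] T k assms(2) by auto
    qed
    have c: "card (insert z N) = Suc (card N)" using fN assms(2) by simp
    show ?thesis
      unfolding RM_no_def split sum.union_disjoint[OF fA fB disj] s1 s2 c by simp
  qed
  have e: "(a/2)/(b/2) = a / (b::real)" for a b by (simp add: field_simps)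
  show ?thesis unfolding half[OF assms(3)] half[OF assms(4)] e ..
qed

end
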